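(* Let $m\ge1$. For every $u$ in the even-parity sequence $\mathcal E^m$ and every $p$ in $\mathcal E^m$, the entry of $M_m$ in the row indexed by $u$ and the column indexed by $p$ is $H^{(u\oplus p)_1}\otimes\cdots\otimes H^{(u\oplus p)_m}$; and for every $u\in\mathcal E^m$ and every $p$ in the odd-parity sequence $\mathcal O^m$, the entry of $M'_m$ in the row indexed by $u$ and the column indexed by $p$ is $H^{(u\oplus p)_1}\otimes\cdots\otimes H^{(u\oplus p)_m}$. (Here $H^0=I$, $H^1=H$, and $(u\oplus p)_j$ is the $j$-th bit of the bitwise XOR of $u$ and $p$.) In other words, the matrix of local operations whose $(u,p)$ entry applies $H$ exactly at the positions where $u$ and the input $m$-tuple $p$ differ, with $u$ of even parity, coincides with $M_m$ when $p$ ranges over even-parity strings and with $M'_m$ when $p$ ranges over odd-parity strings.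
   Context: The matrices $M_i$, $M'_i$ (with entries formal tensor products of length $i$ of $I$ and $H$) are defined by $M_1=I$, $M'_1=H$, $M_{i+1}=\begin{pmatrix} I\otimes M_i & H\otimes M'_i\\ H\otimes M'_i & I\otimes M_i\end{pmatrix}$, $M'_{i+1}=\begin{pmatrix} I\otimes M'_i & H\otimes M_i\\ H\otimes M_i & I\otimes M'_i\end{pmatrix}$, where $A\otimes B$ tensors $A$ on the left with every entry of $B$. $H$ is the Hadamard gate and $I$ the identity. The rows of $M_m$ and $M'_m$ and the columns of $M_m$ are indexed by the $2^{m-1}$ even-parity $m$-bit strings in the order $\mathcal E^m$, and the columns of $M'_m$ by the $2^{m-1}$ odd-parity $m$-bit strings in the order $\mathcal O^m$, where these orders are defined recursively by $\mathcal E^1=(0)$, $\mathcal O^1=(1)$, $\mathcal E^{m+1}=(0e:e\in\mathcal E^m)$ followed by $(1o:o\in\mathcal O^m)$, and $\mathcal O^{m+1}=(0o:o\in\mathcal O^m)$ followed by $(1e:e\in\mathcal E^m)$ (e.g. $\mathcal E^3=(000,011,101,110)$). *)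

theory Defs
  imports Main
begin

datatype gate = I | H

text \<open>A formal tensor product G_1 \<otimes> ... \<otimes> G_i is the list [G_1,...,G_i].
  A matrix is a list of rows, each row a list of entries.\<close>
type_synonym entry = "gate list"
type_synonym gmatrix = "entry list list"

definition tens :: "gate \<Rightarrow> gmatrix \<Rightarrow> gmatrix" where
  "tens A B = map (map (\<lambda>e. A # e)) B"

definition block :: "gmatrix \<Rightarrow> gmatrix \<Rightarrow> gmatrix \<Rightarrow> gmatrix \<Rightarrow> gmatrix" where
  "block P Q R S = map2 (@) P Q @ map2 (@) R S"

text \<open>MM m = (M_m, M'_m) for m \<ge> 1 (the value at 0 is irrelevant).\<close>
fun MM :: "nat \<Rightarrow> gmatrix \<times> gmatrix" where
  "MM 0 = ([], [])"
| "MM (Suc 0) = ([[[I]]], [[[H]]])"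
| "MM (Suc (Suc n)) =
     (let (A, B) = MM (Suc n) in
       (block (tens I A) (tens H B) (tens H B) (tens I A),
        block (tens I B) (tens H A) (tens H A) (tens I B)))"

definition Mmat :: "nat \<Rightarrow> gmatrix" where "Mmat m = fst (MM m)"
definition Mmat' :: "nat \<Rightarrow> gmatrix" where "Mmat' m = snd (MM m)"

text \<open>Bit strings as bool lists (True = 1). EO m = (E^m, O^m) for m \<ge> 1.\<close>
fun EO :: "nat \<Rightarrow> bool list list \<times> bool list list" where
  "EO 0 = ([], [])"
| "EO (Suc 0) = ([[False]], [[True]])"
| "EO (Suc (Suc n)) =
     (let (Ev, Od) = EO (Suc n) in
       (map (Cons False) Ev @ map (Cons True) Od,
        map (Cons False) Od @ map (Cons True) Ev))"

definition Eseq :: "nat \<Rightarrow> bool list list" where "Eseq m = fst (EO m)"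
definition Oseq :: "nat \<Rightarrow> bool list list" where "Oseq m = snd (EO m)"

fun Hpow :: "bool \<Rightarrow> gate" where
  "Hpow False = I" | "Hpow True = H"

definition xor_op :: "nat \<Rightarrow> bool list \<Rightarrow> bool list \<Rightarrow> entry" where
  "xor_op m u p = map (\<lambda>j. Hpow (u ! j \<noteq> p ! j)) [0..<m]"

end

theory Submission
  imports Defs
begin

definition X :: "bool list \<Rightarrow> bool list \<Rightarrow> entry" where
  "X u p = map2 (\<lambda>a b. Hpow (a \<noteq> b)) u p"

lemma X_Cons[simp]: "X (a # u) (b # p) = Hpow (a \<noteq> b) # X u p"
  by (simp add: X_def)

definition inv :: "nat \<Rightarrow> gmatrix \<Rightarrow> gmatrix \<Rightarrow> bool list list \<Rightarrow> bool list list \<Rightarrow> bool" where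
  "inv n A B Ev Od \<longleftrightarrow> (let L = length Ev in length Od = L \<and> length A = L \<and> length B = L \<and>
     (\<forall>i<L. length (A!i) = L \<and> length (B!i) = L \<and> length (Ev!i) = n \<and> length (Od!i) = n) \<and>
     (\<forall>i<L. \<forall>j<L. A!i!j = X (Ev!i) (Ev!j) \<and> A!i!j = X (Od!i) (Od!j) \<and>
                  B!i!j = X (Ev!i) (Od!j) \<and> B!i!j = X (Od!i) (Ev!j)))"

lemma block_nth:
  assumes "length P = L" "length Q = L" "length R = L" "length S = L"
    "\<forall>i<L. length (P!i) = L \<and> length (R!i) = L" "i < L + L"
  shows "block P Q R S ! i ! j = (if i<L then if j<L then P!i!j else Q!i!(j-L)
           else if j<L then R!(i-L)!j else S!(i-L)!(j-L))"
  using assms by (auto simp: block_def nth_append)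

lemma block_len:
  assumes "length P = L" "length Q = L" "length R = L" "length S = L"
  shows "length (block P Q R S) = L + L"
  using assms by (simp add: block_def)

lemma block_rowlen:
  assumes "length P = L" "length Q = L" "length R = L" "length S = L"
    "\<forall>i<L. length (P!i) = L \<and> length (Q!i) = L \<and> length (R!i) = L \<and> length (S!i) = L" "i < L + L"
  shows "length (block P Q R S ! i) = L + L"
  using assms by (auto simp: block_def nth_append)


lemma tens_nth': "i < length B \<Longrightarrow> j < length (B!i) \<Longrightarrow> tens g B ! i ! j = g # B!i!j"
  by (simp add: tens_def)

lemma tens_len[simp]: "length (tens g B) = length B" by (simp add: tens_def)
lemma tens_rowlen[simp]: "i < length B \<Longrightarrow> length (tens g B ! i) = length (B!i)" by (simp add: tens_def)

lemma step:
  assumes "inv n A B Ev Od"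
  shows "inv (Suc n)
     (block (tens I A) (tens H B) (tens H B) (tens I A))
     (block (tens I B) (tens H A) (tens H A) (tens I B))
     (map (Cons False) Ev @ map (Cons True) Od)
     (map (Cons False) Od @ map (Cons True) Ev)"
proof -
  define L where "L = length Ev"
  have l: "length Od = L" "length A = L" "length B = L"
    and rl: "\<forall>i<L. length (A!i) = L \<and> length (B!i) = L \<and> length (Ev!i) = n \<and> length (Od!i) = n"
    and e: "\<forall>i<L. \<forall>j<L. A!i!j = X (Ev!i) (Ev!j) \<and> A!i!j = X (Od!i) (Od!j) \<and>
                  B!i!j = X (Ev!i) (Od!j) \<and> B!i!j = X (Od!i) (Ev!j)"
    using assms unfolding inv_def L_def Let_def by blast+
  have e1: "\<And>i j. i<L \<Longrightarrow> j<L \<Longrightarrow> A!i!j = X (Ev!i) (Ev!j)"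
   and e2: "\<And>i j. i<L \<Longrightarrow> j<L \<Longrightarrow> X (Od!i) (Od!j) = X (Ev!i) (Ev!j)"
   and e3: "\<And>i j. i<L \<Longrightarrow> j<L \<Longrightarrow> B!i!j = X (Ev!i) (Od!j)"
   and e4: "\<And>i j. i<L \<Longrightarrow> j<L \<Longrightarrow> X (Od!i) (Ev!j) = X (Ev!i) (Od!j)"
    using e by metis+
  show ?thesis
    unfolding inv_def Let_def
    apply (simp add: l L_def[symmetric])
    apply (intro conjI allI impI)
    subgoal using l rl by (simp add: block_len)
    subgoal using l rl by (simp add: block_len)
    subgoal for i using l rl by (intro block_rowlen) auto
    subgoal for i using l rl by (intro block_rowlen) auto
    subgoal for i using l rl L_def by (auto simp: nth_append)
    subgoal for i using l rl L_def by (auto simp: nth_append)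
    subgoal for i j using l rl L_def by (subst block_nth[where L=L]) (auto simp: nth_append tens_nth' e1 e2 e3 e4)
    subgoal for i j using l rl L_def by (subst block_nth[where L=L]) (auto simp: nth_append tens_nth' e1 e2 e3 e4)
    subgoal for i j using l rl L_def by (subst block_nth[where L=L]) (auto simp: nth_append tens_nth' e1 e2 e3 e4)
    subgoal for i j using l rl L_def by (subst block_nth[where L=L]) (auto simp: nth_append tens_nth' e1 e2 e3 e4)
    done
qed

lemma main: "inv (Suc n) (fst (MM (Suc n))) (snd (MM (Suc n))) (fst (EO (Suc n))) (snd (EO (Suc n)))"
proof (induction n)
  case 0
  then show ?case by (simp add: inv_def X_def)
next
  case (Suc n)
  obtain A B where ab: "MM (Suc n) = (A, B)" by (cases "MM (Suc n)")
  obtain Ev Od where eo: "EO (Suc n) = (Ev, Od)" by (cases "EO (Suc n)")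
  show ?case using Suc step[of "Suc n" A B Ev Od] by (simp add: ab eo)
qed

lemma xor_X: "length u = m \<Longrightarrow> length p = m \<Longrightarrow> xor_op m u p = X u p"
  unfolding xor_op_def X_def
  by (rule nth_equalityI) auto

theorem lemma1:
  fixes m :: nat
  assumes "m \<ge> 1"
  shows "(\<forall>i < length (Eseq m). \<forall>j < length (Eseq m).
            Mmat m ! i ! j = xor_op m (Eseq m ! i) (Eseq m ! j))
       \<and> (\<forall>i < length (Eseq m). \<forall>j < length (Oseq m).
            Mmat' m ! i ! j = xor_op m (Eseq m ! i) (Oseq m ! j))"
proof -
  obtain n where n: "m = Suc n" using assms by (cases m) auto
  show ?thesis using main[of n] unfolding n Mmat_def Mmat'_def Eseq_def Oseq_def inv_def Let_def
    by (auto simp: xor_X)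
qed

end
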